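(* Let $m\ge 3$ be an integer, $n=2^m-1$, and $\phi\in\mathbb{R}$. Take a logical state of the code $\mathrm{QRM}(1,m)$, apply $R_z(-\phi)^{\otimes n}$ (transversal $R_z(-\phi)$), and then measure successively the $m$ $X$-type stabilizer generators $S^X_1,\dots,S^X_m$, where a measurement "fails" (rejects) if its outcome is $-1$. Then the probability that at least one of these $m$ syndrome measurements fails is at most $1-\left(1-\frac{1}{2^{m-1}}\right)^{m}$.
   Context: $Z=|0\rangle\langle0|-|1\rangle\langle1|$ and $R_z(\theta)=\exp(-i\theta Z/2)$. Classical first-order Reed–Muller code $\mathrm{RM}(1,m)$: binary code of length $2^m$ whose codewords are the truth tables of affine Boolean functions $a_0+a_1x_1+\dots+a_mx_m$ on $\{0,1\}^m$. The shortened code $\overline{\mathrm{RM}}(1,m)$ keeps the codewords of $\mathrm{RM}(1,m)$ whose first coordinate (value at $x=0$) is $0$ and deletes that coordinate (length $2^m-1$). The punctured code $\mathrm{RM}^*(1,m)$ is generated by $\overline{\mathrm{RM}}(1,m)$ together with the all-ones vector $\mathbf{1}$. The quantum Reed–Muller code $\mathrm{QRM}(1,m)$ is the CSS code on $2^m-1$ qubits with logical basis states $|x_L\rangle\propto\sum_{y\in\overline{\mathrm{RM}}(1,m)}|y+x\mathbf{1}\rangle$, $x\in\{0,1\}$. Its $X$-type stabilizer generators are $S^X_i=\bigotimes_k X^{(g_i)_k}$ for a basis $g_1,\dots,g_m$ of $\overline{\mathrm{RM}}(1,m)$; its $Z$-type stabilizers are $Z^h$ for rows $h$ of a parity-check matrix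 of $\mathrm{RM}^*(1,m)$. *)

theory Defs
  imports Complex_Main
begin

text \<open>Qubits of QRM(1,m) are indexed by k in {1..<2^m}; qubit k corresponds to the
nonzero point x in {0,1}^m whose i-th coordinate is bit i of k (the deleted
first coordinate is x = 0, i.e. k = 0).  A computational basis vector |y> of
the n = 2^m - 1 qubits is represented by the set y of qubits that are 1.
A state is a function from basis labels (nat set) to complex amplitudes,
supported on Pow (qubits m).\<close>

definition qubits :: "nat \<Rightarrow> nat set" where
  "qubits m = {1..<2^m}"

definition symdiff :: "nat set \<Rightarrow> nat set \<Rightarrow> nat set" where
  "symdiff A B = (A - B) \<union> (B - A)"

text \<open>Shortened first-order Reed-Muller code: truth tables of the affine functions
vanishing at 0, i.e. the linear functions x \<mapsto> sum_{i in a} x_i (a \<subseteq> {0..<m}),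
with the coordinate x = 0 deleted.\<close>
definition shortRM :: "nat \<Rightarrow> nat set set" where
  "shortRM m = {{k \<in> qubits m. odd (card {i \<in> a. bit k i})} | a. a \<subseteq> {0..<m}}"

text \<open>GF(2)-linear combination (symmetric difference) of g_i, i in A.\<close>
definition gsum :: "(nat \<Rightarrow> nat set) \<Rightarrow> nat set \<Rightarrow> nat set" where
  "gsum g A = {k. odd (card {i \<in> A. k \<in> g i})}"

definition is_basis :: "nat \<Rightarrow> (nat \<Rightarrow> nat set) \<Rightarrow> bool" where
  "is_basis m g \<longleftrightarrow> (\<forall>i<m. g i \<in> shortRM m) \<and> bij_betw (gsum g) (Pow {0..<m}) (shortRM m)"

type_synonym state = "nat set \<Rightarrow> complex"

definition ketL :: "nat \<Rightarrow> bool \<Rightarrow> state" where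
  "ketL m x = (\<lambda>y. if y \<subseteq> qubits m \<and> symdiff y (if x then qubits m else {}) \<in> shortRM m
                   then complex_of_real (1 / sqrt (2 ^ m)) else 0)"

definition logical_state :: "nat \<Rightarrow> complex \<Rightarrow> complex \<Rightarrow> state" where
  "logical_state m \<alpha> \<beta> = (\<lambda>y. \<alpha> * ketL m False y + \<beta> * ketL m True y)"

text \<open>R_z(theta) = exp(-i theta Z/2): diagonal entry on |b> (b = True means |1>).\<close>
definition Rz_diag :: "real \<Rightarrow> bool \<Rightarrow> complex" where
  "Rz_diag \<theta> b = (if b then exp (\<i> * complex_of_real (\<theta> / 2)) else exp (- \<i> * complex_of_real (\<theta> / 2)))"

definition transversal_Rz :: "nat \<Rightarrow> real \<Rightarrow> state \<Rightarrow> state" where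
  "transversal_Rz m \<theta> \<psi> = (\<lambda>y. (\<Prod>k\<in>qubits m. Rz_diag \<theta> (k \<in> y)) * \<psi> y)"

definition Xop :: "nat set \<Rightarrow> state \<Rightarrow> state" where
  "Xop g \<psi> = (\<lambda>y. \<psi> (symdiff y g))"

text \<open>Projector for measuring X^g with outcome (-1)^b: (I + (-1)^b X^g)/2
  (b = True is outcome -1, i.e. failure).\<close>
definition proj :: "nat set \<Rightarrow> bool \<Rightarrow> state \<Rightarrow> state" where
  "proj g b \<psi> = (\<lambda>y. (\<psi> y + (if b then -1 else 1) * Xop g \<psi> y) / 2)"

fun seq_proj :: "(nat \<Rightarrow> nat set) \<Rightarrow> nat \<Rightarrow> bool list \<Rightarrow> state \<Rightarrow> state" where
  "seq_proj g i [] \<psi> = \<psi>"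
| "seq_proj g i (b # bs) \<psi> = seq_proj g (Suc i) bs (proj (g i) b \<psi>)"

definition sqnorm :: "nat \<Rightarrow> state \<Rightarrow> real" where
  "sqnorm m \<psi> = (\<Sum>y\<in>Pow (qubits m). (cmod (\<psi> y))\<^sup>2)"

definition outcome_prob :: "nat \<Rightarrow> (nat \<Rightarrow> nat set) \<Rightarrow> state \<Rightarrow> bool list \<Rightarrow> real" where
  "outcome_prob m g \<psi> bs = sqnorm m (seq_proj g 0 bs \<psi>)"

definition fail_prob :: "nat \<Rightarrow> (nat \<Rightarrow> nat set) \<Rightarrow> state \<Rightarrow> real" where
  "fail_prob m g \<psi> = (\<Sum>bs\<in>{bs. length bs = m \<and> True \<in> set bs}. outcome_prob m g \<psi> bs)"

end

theory Submission
  imports Defs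
begin


lemma symdiff_mem[simp]: "x \<in> symdiff A B \<longleftrightarrow> (x \<in> A) \<noteq> (x \<in> B)"
  by (auto simp: symdiff_def)

lemma odd_card_symdiff:
  assumes "finite X" "finite Y"
  shows "odd (card (X - Y \<union> (Y - X))) \<longleftrightarrow> (odd (card X) \<noteq> odd (card Y))"
proof -
  have a: "card (X - Y \<union> (Y - X)) = card (X - Y) + card (Y - X)"
    using assms by (intro card_Un_disjoint) auto
  have b: "card X = card (X - Y) + card (X \<inter> Y)"
    using assms by (metis Diff_Diff_Int card_Diff_subset_Int card_mono Int_lower1 le_add_diff_inverse2 finite_Int Diff_subset Int_commute card_Int_Diff)
  have c: "card Y = card (Y - X) + card (X \<inter> Y)"
    using assms by (metis Int_commute card_Int_Diff add.commute)
  show ?thesis using a b c by auto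
qed

lemma gsum_symdiff:
  assumes "finite A" "finite B"
  shows "symdiff (gsum g A) (gsum g B) = gsum g (A - B \<union> (B - A))"
proof (rule set_eqI)
  fix k
  have e: "{i \<in> A - B \<union> (B - A). k \<in> g i} = {i \<in> A. k \<in> g i} - {i \<in> B. k \<in> g i} \<union> ({i \<in> B. k \<in> g i} - {i \<in> A. k \<in> g i})"
    by auto
  show "k \<in> symdiff (gsum g A) (gsum g B) \<longleftrightarrow> k \<in> gsum g (A - B \<union> (B - A))"
    unfolding symdiff_mem gsum_def mem_Collect_eq e
    by (subst odd_card_symdiff) (use assms in auto)
qed

lemma gsum_empty[simp]: "gsum g {} = {}" by (simp add: gsum_def)
lemma gsum_single: "gsum g {i} = g i"
proof -
  have "\<And>x. {ia. ia = i \<and> x \<in> g ia} = (if x \<in> g i then {i} else {})" by auto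
  then show ?thesis by (simp add: gsum_def)
qed



lemma symdiff_cancel[simp]: "symdiff (symdiff y g) g = y"
  by (auto simp: symdiff_def)

lemma sum_shift:
  assumes "g \<subseteq> qubits m"
  shows "(\<Sum>y\<in>Pow (qubits m). f (symdiff y g)) = (\<Sum>y\<in>Pow (qubits m). f y)"
  by (rule sum.reindex_bij_witness[where i="\<lambda>y. symdiff y g" and j="\<lambda>y. symdiff y g"])
     (use assms in \<open>auto simp: symdiff_def\<close>)

lemma parallelogram:
  fixes a b :: complex
  shows "(cmod (a + b))\<^sup>2 + (cmod (a - b))\<^sup>2 = 2 * ((cmod a)\<^sup>2 + (cmod b)\<^sup>2)"
  by (simp only: cmod_power2) (simp add: power2_eq_square algebra_simps)

lemma proj_pyth:
  assumes "g \<subseteq> qubits m"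
  shows "sqnorm m (proj g False \<psi>) + sqnorm m (proj g True \<psi>) = sqnorm m \<psi>"
proof -
  have "sqnorm m (proj g False \<psi>) + sqnorm m (proj g True \<psi>)
      = (\<Sum>y\<in>Pow (qubits m). ((cmod (\<psi> y))\<^sup>2 + (cmod (\<psi> (symdiff y g)))\<^sup>2) / 2)"
    unfolding sqnorm_def proj_def Xop_def sum.distrib[symmetric]
    apply (intro sum.cong refl)
    subgoal for x using parallelogram[of "\<psi> x" "\<psi> (symdiff x g)"] by (simp add: norm_divide power_divide)
    done
  also have "\<dots> = ((\<Sum>y\<in>Pow (qubits m). (cmod (\<psi> y))\<^sup>2) + (\<Sum>y\<in>Pow (qubits m). (cmod (\<psi> (symdiff y g)))\<^sup>2)) / 2"
    by (simp only: add_divide_distrib sum.distrib sum_divide_distrib)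
  also have "\<dots> = sqnorm m \<psi>"
    unfolding sqnorm_def sum_shift[OF assms, of "\<lambda>y. (cmod (\<psi> y))\<^sup>2"] by simp
  finally show ?thesis .
qed

lemma lists_Suc: "{bs :: bool list. length bs = Suc n} = (\<lambda>(b, bs). b # bs) ` (UNIV \<times> {bs. length bs = n})"
  by (auto simp: length_Suc_conv image_iff)

lemma finite_lists: "finite {bs :: bool list. length bs = n}"
  using finite_lists_length_eq[of "UNIV :: bool set" n] by simp

lemma total_prob:
  assumes "\<forall>j. i \<le> j \<and> j < i + n \<longrightarrow> g j \<subseteq> qubits m"
  shows "(\<Sum>bs\<in>{bs. length bs = n}. sqnorm m (seq_proj g i bs \<psi>)) = sqnorm m \<psi>"
  using assms
proof (induction n arbitrary: i \<psi>)
  case 0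
  then show ?case by simp
next
  case (Suc n)
  have inj: "inj_on (\<lambda>(b, bs). (b::bool) # bs) (UNIV \<times> {bs. length bs = n})"
    by (auto simp: inj_on_def)
  have IH: "\<And>\<phi>. (\<Sum>bs\<in>{bs. length bs = n}. sqnorm m (seq_proj g (Suc i) bs \<phi>)) = sqnorm m \<phi>"
    using Suc.prems by (intro Suc.IH) auto
  have gi: "g i \<subseteq> qubits m" using Suc.prems by auto
  have "(\<Sum>bs\<in>{bs. length bs = Suc n}. sqnorm m (seq_proj g i bs \<psi>))
      = (\<Sum>(b, bs)\<in>UNIV \<times> {bs. length bs = n}. sqnorm m (seq_proj g (Suc i) bs (proj (g i) b \<psi>)))"
    unfolding lists_Suc by (subst sum.reindex[OF inj]) (simp add: case_prod_beta)
  also have "\<dots> = (\<Sum>b\<in>UNIV. \<Sum>bs\<in>{bs. length bs = n}. sqnorm m (seq_proj g (Suc i) bs (proj (g i) b \<psi>)))"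
    by (subst sum.cartesian_product) simp
  also have "\<dots> = (\<Sum>b\<in>UNIV. sqnorm m (proj (g i) b \<psi>))"
    by (simp add: IH)
  also have "\<dots> = sqnorm m \<psi>"
    using proj_pyth[OF gi] by (simp add: UNIV_bool add.commute)
  finally show ?case .
qed



lemma symdiff_empty[simp]: "symdiff y {} = y" by (auto simp: symdiff_def)

lemma symdiff_assoc: "symdiff (symdiff a b) c = symdiff a (symdiff b c)"
  by (auto simp: symdiff_def)

lemma gsum_insert:
  assumes "finite A" "i \<notin> A"
  shows "gsum g (insert i A) = symdiff (gsum g A) (g i)"
proof -
  have "symdiff (gsum g A) (gsum g {i}) = gsum g (A - {i} \<union> ({i} - A))"
    using assms by (intro gsum_symdiff) auto
  moreover have "A - {i} \<union> ({i} - A) = insert i A" using assms by auto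
  ultimately show ?thesis by (simp add: gsum_single)
qed

lemma seq_proj_false:
  "seq_proj g i (replicate n False) \<psi> =
     (\<lambda>y. (\<Sum>A\<in>Pow {i..<i+n}. \<psi> (symdiff y (gsum g A))) / 2 ^ n)"
proof (induction n arbitrary: i \<psi>)
  case 0
  then show ?case by (simp add: gsum_def)
next
  case (Suc n)
  let ?P = "Pow {Suc i..<Suc i + n}"
  have iv: "{i..<i + Suc n} = insert i {Suc i..<Suc i + n}" by auto
  have inj: "inj_on (insert i) ?P"
    by (rule inj_onI) (metis PowD atLeastLessThan_iff insert_ident lessI not_less_eq_eq subsetD
        less_or_eq_imp_le)
  have disj: "?P \<inter> insert i ` ?P = {}" by auto
  show ?case
  proof (rule ext)
    fix y
    have "seq_proj g i (replicate (Suc n) False) \<psi> y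
        = (\<Sum>A\<in>?P. (\<psi> (symdiff y (gsum g A)) + \<psi> (symdiff (symdiff y (gsum g A)) (g i))) / 2) / 2 ^ n"
      by (simp add: Suc.IH proj_def Xop_def)
    also have "\<dots> = ((\<Sum>A\<in>?P. \<psi> (symdiff y (gsum g A))) + (\<Sum>A\<in>?P. \<psi> (symdiff y (gsum g (insert i A))))) / 2 ^ Suc n"
    proof -
      have "\<And>A. A \<in> ?P \<Longrightarrow> gsum g (insert i A) = symdiff (gsum g A) (g i)"
        by (rule gsum_insert) (auto intro: finite_subset)
      then have "(\<Sum>A\<in>?P. \<psi> (symdiff y (gsum g (insert i A)))) = (\<Sum>A\<in>?P. \<psi> (symdiff (symdiff y (gsum g A)) (g i)))"
        by (simp add: symdiff_assoc)
      then show ?thesis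
        by (simp add: sum.distrib sum_divide_distrib[symmetric] add_divide_distrib[symmetric])
    qed
    also have "\<dots> = (\<Sum>A\<in>Pow {i..<i + Suc n}. \<psi> (symdiff y (gsum g A))) / 2 ^ Suc n"
      unfolding iv Pow_insert
      by (subst sum.union_disjoint) (use disj inj in \<open>auto simp: sum.reindex\<close>)
    finally show "seq_proj g i (replicate (Suc n) False) \<psi> y = (\<Sum>A\<in>Pow {i..<i + Suc n}. \<psi> (symdiff y (gsum g A))) / 2 ^ Suc n" .
  qed
qed



lemma xor_xor_nat: "xor (xor (k::nat) x) x = k"
  by (rule bit_eqI) (auto simp: bit_xor_iff)

lemma weight_aux:
  assumes a: "a \<subseteq> {0..<m}" and j: "j \<in> a"
  shows "card {k \<in> {..<(2::nat)^m}. odd (card {i \<in> a. bit k i})} = 2 ^ (m - 1)"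
proof -
  define f where "f k = xor k ((2::nat) ^ j)" for k :: nat
  have jm: "j < m" using a j by auto
  have fa: "finite a" using a finite_subset by blast
  have ff: "f (f k) = k" for k unfolding f_def by (rule xor_xor_nat)
  have bound: "f k < 2 ^ m" if "k < 2 ^ m" for k
  proof -
    have "take_bit m (f k) = f k"
      unfolding f_def take_bit_xor
      using that jm by (simp add: take_bit_nat_eq_self)
    then show ?thesis by (simp add: take_bit_nat_eq_self_iff)
  qed
  have par: "even (card {i \<in> a. bit (f k) i}) \<longleftrightarrow> \<not> even (card {i \<in> a. bit k i})" for k
  proof -
    have "{i \<in> a. bit (f k) i} = {i \<in> a. bit k i} - {j} \<union> ({j} - {i \<in> a. bit k i})"
      using j by (auto simp: f_def bit_xor_iff bit_exp_iff)
    moreover have "odd (card ({i \<in> a. bit k i} - {j} \<union> ({j} - {i \<in> a. bit k i}))) \<longleftrightarrow> (odd (card {i \<in> a. bit k i}) \<noteq> odd (card {j}))"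
      using fa by (intro odd_card_symdiff) auto
    ultimately show ?thesis by auto
  qed
  define Od where "Od = {k \<in> {..<(2::nat)^m}. odd (card {i \<in> a. bit k i})}"
  define Ev where "Ev = {k \<in> {..<(2::nat)^m}. even (card {i \<in> a. bit k i})}"
  have "bij_betw f Ev Od"
    by (rule bij_betw_byWitness[where f'=f]) (auto simp: Ev_def Od_def ff bound par)
  then have ceq: "card Ev = card Od" by (rule bij_betw_same_card)
  have un: "Ev \<union> Od = {..<(2::nat)^m}" by (auto simp: Ev_def Od_def)
  have "card Ev + card Od = card (Ev \<union> Od)"
    by (rule card_Un_disjoint[symmetric]) (auto simp: Ev_def Od_def)
  then have "card Ev + card Od = 2 ^ m" unfolding un by simp
  then have "2 * card Od = 2 ^ m" using ceq by simp
  moreover have "(2::nat) ^ m = 2 * 2 ^ (m - 1)" using jm by (cases m) auto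
  ultimately show ?thesis unfolding Od_def by simp
qed

lemma weight:
  assumes a: "a \<subseteq> {0..<m}" and j: "j \<in> a"
  shows "card {k \<in> qubits m. odd (card {i \<in> a. bit k i})} = 2 ^ (m - 1)"
proof -
  have "{k \<in> qubits m. odd (card {i \<in> a. bit k i})} = {k \<in> {..<(2::nat)^m}. odd (card {i \<in> a. bit k i})}"
  proof -
    have "k \<noteq> 0" if "odd (card {i \<in> a. bit k i})" for k
      using that by (cases "k = 0") auto
    then show ?thesis by (force simp: qubits_def)
  qed
  then show ?thesis using weight_aux[OF assms] by simp
qed



lemma shortRM_sub: "c \<in> shortRM m \<Longrightarrow> c \<subseteq> qubits m"
  by (auto simp: shortRM_def)

lemma card_qubits: "card (qubits m) = 2 ^ m - 1"
  by (simp add: qubits_def)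

lemma finite_qubits[simp]: "finite (qubits m)"
  by (simp add: qubits_def)

lemma shortRM_card:
  assumes "c \<in> shortRM m" "c \<noteq> {}"
  shows "card c = 2 ^ (m - 1)"
proof -
  obtain a where a: "a \<subseteq> {0..<m}" and c: "c = {k \<in> qubits m. odd (card {i \<in> a. bit k i})}"
    using assms(1) by (auto simp: shortRM_def)
  have "a \<noteq> {}" using assms(2) c by auto
  then obtain j where "j \<in> a" by auto
  then show ?thesis using weight[OF a] c by simp
qed

lemma basis_image:
  assumes "is_basis m g"
  shows "shortRM m = gsum g ` Pow {0..<m}" "inj_on (gsum g) (Pow {0..<m})"
    "card (shortRM m) = 2 ^ m" "finite (shortRM m)"
proof -
  have b: "bij_betw (gsum g) (Pow {0..<m}) (shortRM m)" using assms by (simp add: is_basis_def)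
  then show "shortRM m = gsum g ` Pow {0..<m}" "inj_on (gsum g) (Pow {0..<m})"
    by (auto simp: bij_betw_def)
  show "card (shortRM m) = 2 ^ m" using bij_betw_same_card[OF b] by (simp add: card_Pow)
  then show "finite (shortRM m)" by (intro card_ge_0_finite) simp
qed

lemma empty_in_shortRM: "is_basis m g \<Longrightarrow> {} \<in> shortRM m"
  using basis_image(1)[of m g] by (auto intro: image_eqI[where x="{}"])

lemma shortRM_closed:
  assumes "is_basis m g" "c \<in> shortRM m" "d \<in> shortRM m"
  shows "symdiff c d \<in> shortRM m"
proof -
  obtain A B where A: "A \<subseteq> {0..<m}" "c = gsum g A" and B: "B \<subseteq> {0..<m}" "d = gsum g B"
    using assms basis_image(1)[OF assms(1)] by auto
  have "symdiff c d = gsum g (A - B \<union> (B - A))"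
    using A B by (simp add: gsum_symdiff finite_subset)
  moreover have "A - B \<union> (B - A) \<in> Pow {0..<m}" using A B by auto
  ultimately show ?thesis using basis_image(1)[OF assms(1)] by auto
qed

lemma qubits_notin:
  assumes "is_basis m g" "m \<ge> 2"
  shows "qubits m \<notin> shortRM m"
proof
  assume q: "qubits m \<in> shortRM m"
  have "(2::nat) ^ 2 \<le> 2 ^ m" using assms(2) by (intro power_increasing) auto
  then have ne: "qubits m \<noteq> {}" by (auto simp: qubits_def)
  have "card (qubits m) = 2 ^ (m - 1)" using shortRM_card[OF q ne] .
  moreover have "(2::nat) ^ m = 2 * 2 ^ (m - 1)" using assms(2) by (cases m) auto
  moreover have "(2::nat) ^ 1 \<le> 2 ^ (m - 1)" using assms(2) by (intro power_increasing) auto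
  ultimately show False by (simp add: card_qubits)
qed

lemma symdiff_comm: "symdiff a b = symdiff b a" by (auto simp: symdiff_def)

lemma disjoint_cosets:
  assumes "is_basis m g" "m \<ge> 2" "c \<in> shortRM m" "d \<in> shortRM m"
  shows "c \<noteq> symdiff d (qubits m)"
proof
  assume e: "c = symdiff d (qubits m)"
  have "symdiff c d = qubits m" using e shortRM_sub[OF assms(4)] by (auto simp: symdiff_def)
  then show False using shortRM_closed[OF assms(1,3,4)] qubits_notin[OF assms(1,2)] by simp
qed



lemma norm_Rz[simp]: "cmod (Rz_diag \<theta> b) = 1"
  by (simp add: Rz_diag_def norm_exp_eq_Re)

lemma norm_ph[simp]: "cmod (\<Prod>k\<in>A. Rz_diag \<theta> (k \<in> y)) = 1"
  by (simp add: prod_norm[symmetric])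

lemma ph_card:
  assumes "y \<subseteq> qubits m"
  shows "(\<Prod>k\<in>qubits m. Rz_diag \<theta> (k \<in> y)) = Rz_diag \<theta> True ^ card y * Rz_diag \<theta> False ^ (card (qubits m) - card y)"
proof -
  have "(\<Prod>k\<in>qubits m. Rz_diag \<theta> (k \<in> y)) = (\<Prod>k\<in>qubits m. if k \<in> y then Rz_diag \<theta> True else Rz_diag \<theta> False)"
    by (intro prod.cong) auto
  also have "\<dots> = (\<Prod>k\<in>qubits m \<inter> {k. k \<in> y}. Rz_diag \<theta> True) * (\<Prod>k\<in>qubits m \<inter> - {k. k \<in> y}. Rz_diag \<theta> False)"
    by (rule prod.If_cases) simp
  also have "qubits m \<inter> {k. k \<in> y} = y" using assms by auto
  also have "qubits m \<inter> - {k. k \<in> y} = qubits m - y" by auto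
  finally show ?thesis using assms by (simp add: card_Diff_subset finite_subset)
qed

lemma sum_bound:
  fixes f :: "nat set \<Rightarrow> complex"
  assumes "finite C" "z \<in> C" "\<And>c. c \<in> C \<Longrightarrow> c \<noteq> z \<Longrightarrow> f c = w" "cmod w = 1" "cmod (f z) = 1"
  shows "real (card C) - 2 \<le> cmod (\<Sum>c\<in>C. f c)"
proof -
  have "(\<Sum>c\<in>C. f c) = f z + (\<Sum>c\<in>C - {z}. f c)"
    using assms(1,2) by (rule sum.remove)
  also have "(\<Sum>c\<in>C - {z}. f c) = (\<Sum>c\<in>C - {z}. w)"
    using assms(3) by (intro sum.cong) auto
  also have "\<dots> = of_nat (card C - 1) * w" using assms(1,2) by simp
  finally have e: "(\<Sum>c\<in>C. f c) = f z + of_nat (card C - 1) * w" .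
  have "cmod (of_nat (card C - 1) * w) - cmod (f z) \<le> cmod (f z + of_nat (card C - 1) * w)"
    by (metis add.commute norm_diff_ineq)
  moreover have "cmod (of_nat (card C - 1) * w) = real (card C - 1)"
    using assms(4) by (simp add: norm_mult)
  moreover have "card C \<ge> 1" using assms(1,2) by (metis One_nat_def Suc_leI card_gt_0_iff empty_iff)
  ultimately show ?thesis using e assms(5) by (simp add: of_nat_diff)
qed



lemma symdiff_invol[simp]: "symdiff y (symdiff y c) = c"
  by (auto simp: symdiff_def)

theorem lemma2:
  fixes m :: nat and \<phi> :: real and \<alpha> \<beta> :: complex and g :: "nat \<Rightarrow> nat set"
  assumes "m \<ge> 3"
    and "(cmod \<alpha>)\<^sup>2 + (cmod \<beta>)\<^sup>2 = 1"
    and "is_basis m g"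
  shows "fail_prob m g (transversal_Rz m (- \<phi>) (logical_state m \<alpha> \<beta>))
           \<le> 1 - (1 - 1 / 2 ^ (m - 1)) ^ m"
proof -
  define Q where "Q = qubits m"
  define C where "C = shortRM m"
  define C' where "C' = (\<lambda>c. symdiff c Q) ` C"
  define N :: nat where "N = 2 ^ m"
  define s :: real where "s = 1 / sqrt (2 ^ m)"
  define ph where "ph y = (\<Prod>k\<in>Q. Rz_diag (- \<phi>) (k \<in> y))" for y
  define \<psi> where "\<psi> = transversal_Rz m (- \<phi>) (logical_state m \<alpha> \<beta>)"
  have m2: "m \<ge> 2" using assms(1) by simp
  have bas: "is_basis m g" by fact
  have finC: "finite C" and cardC: "card C = N" and Cimg: "C = gsum g ` Pow {0..<m}"
    and inj: "inj_on (gsum g) (Pow {0..<m})"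
    using basis_image[OF bas] by (auto simp: C_def N_def)
  have CQ: "\<And>c. c \<in> C \<Longrightarrow> c \<subseteq> Q" by (simp add: C_def Q_def shortRM_sub)
  have emp: "{} \<in> C" using empty_in_shortRM[OF bas] by (simp add: C_def)
  have clo: "\<And>c d. c \<in> C \<Longrightarrow> d \<in> C \<Longrightarrow> symdiff c d \<in> C"
    using shortRM_closed[OF bas] by (simp add: C_def)
  have disj: "\<And>c d. c \<in> C \<Longrightarrow> d \<in> C \<Longrightarrow> c \<noteq> symdiff d Q"
    using disjoint_cosets[OF bas m2] by (simp add: C_def Q_def)
  have C'Q: "\<And>y. y \<in> C' \<Longrightarrow> y \<subseteq> Q" using CQ by (fastforce simp: C'_def symdiff_def)
  have dis: "C \<inter> C' = {}" using disj by (auto simp: C'_def)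
  have injQ: "inj_on (\<lambda>c. symdiff c Q) C"
    by (rule inj_on_inverseI[where g="\<lambda>c. symdiff c Q"]) simp
  have finC': "finite C'" using finC by (simp add: C'_def)
  have cardC': "card C' = N" using card_image[OF injQ] cardC by (simp add: C'_def)
  have memC': "y \<subseteq> Q \<and> symdiff y Q \<in> C \<longleftrightarrow> y \<in> C'" for y
  proof
    assume "y \<subseteq> Q \<and> symdiff y Q \<in> C"
    then show "y \<in> C'" unfolding C'_def by (intro image_eqI[where x="symdiff y Q"]) auto
  next
    assume "y \<in> C'"
    then obtain c where c: "c \<in> C" "y = symdiff c Q" by (auto simp: C'_def)
    have "y \<subseteq> Q" using c CQ[OF c(1)] by (auto simp: symdiff_def)
    moreover have "symdiff y Q \<in> C" using c by simp
    ultimately show "y \<subseteq> Q \<and> symdiff y Q \<in> C" by simp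
  qed
  have k0: "ketL m False y = (if y \<in> C then complex_of_real s else 0)" for y
    using CQ by (auto simp: ketL_def C_def[symmetric] Q_def[symmetric] s_def)
  have k1: "ketL m True y = (if y \<in> C' then complex_of_real s else 0)" for y
    using memC'[of y] by (auto simp: ketL_def C_def[symmetric] Q_def[symmetric] s_def)
  have psi: "\<psi> y = ph y * (\<alpha> * (if y \<in> C then complex_of_real s else 0) + \<beta> * (if y \<in> C' then complex_of_real s else 0))" for y
    unfolding \<psi>_def transversal_Rz_def logical_state_def ph_def Q_def k0 k1 by simp
  have psiC: "\<psi> y = ph y * \<alpha> * s" if "y \<in> C" for y
    using that dis psi[of y] by auto
  have psiC': "\<psi> y = ph y * \<beta> * s" if "y \<in> C'" for y
    using that dis psi[of y] by auto
  have psi0: "\<psi> y = 0" if "y \<notin> C" "y \<notin> C'" for y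
    using that psi[of y] by auto
  have nph: "cmod (ph y) = 1" for y by (simp add: ph_def)
  have s2: "s\<^sup>2 * real N = 1" by (simp add: s_def N_def power_divide)
  have sub: "C \<union> C' \<subseteq> Pow Q" using CQ C'Q by auto
  have finPQ: "finite (Pow Q)" by (simp add: Q_def)
  have norm1: "sqnorm m \<psi> = 1"
  proof -
    have "sqnorm m \<psi> = (\<Sum>y\<in>C \<union> C'. (cmod (\<psi> y))\<^sup>2)"
      unfolding sqnorm_def Q_def[symmetric]
      by (rule sum.mono_neutral_right[OF finPQ sub]) (auto simp: psi0)
    also have "\<dots> = (\<Sum>y\<in>C. (cmod (\<psi> y))\<^sup>2) + (\<Sum>y\<in>C'. (cmod (\<psi> y))\<^sup>2)"
      by (rule sum.union_disjoint[OF finC finC' dis])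
    also have "(\<Sum>y\<in>C. (cmod (\<psi> y))\<^sup>2) = (\<Sum>y\<in>C. (cmod \<alpha>)\<^sup>2 * s\<^sup>2)"
      by (intro sum.cong refl) (simp add: psiC norm_mult nph power_mult_distrib)
    also have "(\<Sum>y\<in>C'. (cmod (\<psi> y))\<^sup>2) = (\<Sum>y\<in>C'. (cmod \<beta>)\<^sup>2 * s\<^sup>2)"
      by (intro sum.cong refl) (simp add: psiC' norm_mult nph power_mult_distrib)
    finally show ?thesis using s2 assms(2) cardC cardC'
      by (simp add: algebra_simps) (metis distrib_left mult.commute mult_1)
  qed
  define P where "P = seq_proj g 0 (replicate m False) \<psi>"
  have gQ: "\<forall>j. 0 \<le> j \<and> j < 0 + m \<longrightarrow> g j \<subseteq> qubits m"
    using bas by (auto simp: is_basis_def shortRM_sub)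
  have tot: "(\<Sum>bs\<in>{bs. length bs = m}. outcome_prob m g \<psi> bs) = 1"
    using total_prob[OF gQ, of \<psi>] norm1 by (simp add: outcome_prob_def)
  have lists: "{bs. length bs = m} = {bs. length bs = m \<and> True \<in> set bs} \<union> {replicate m False}"
  proof -
    have "bs = replicate m False" if "length bs = m" "True \<notin> set bs" for bs
      using that by (metis (full_types) replicate_length_same)
    then show ?thesis by auto
  qed
  have fp: "fail_prob m g \<psi> = 1 - sqnorm m P"
  proof -
    have "1 = (\<Sum>bs\<in>{bs. length bs = m \<and> True \<in> set bs}. outcome_prob m g \<psi> bs) + outcome_prob m g \<psi> (replicate m False)"
      unfolding tot[symmetric] lists
      by (subst sum.union_disjoint) (auto intro: finite_subset[OF _ finite_lists[of m]])
    then show ?thesis by (simp add: fail_prob_def outcome_prob_def P_def)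
  qed
  have Pform: "P y = (\<Sum>c\<in>C. \<psi> (symdiff y c)) / of_nat N" for y
  proof -
    have "P y = (\<Sum>A\<in>Pow {0..<m}. \<psi> (symdiff y (gsum g A))) / 2 ^ m"
      by (simp add: P_def seq_proj_false)
    also have "(\<Sum>A\<in>Pow {0..<m}. \<psi> (symdiff y (gsum g A))) = (\<Sum>c\<in>C. \<psi> (symdiff y c))"
      unfolding Cimg by (simp add: sum.reindex[OF inj])
    finally show ?thesis by (simp add: N_def)
  qed
  define S0 where "S0 = (\<Sum>c\<in>C. ph c)"
  define S1 where "S1 = (\<Sum>c\<in>C. ph (symdiff c Q))"
  have PC: "P y = \<alpha> * s * S0 / of_nat N" if y: "y \<in> C" for y
  proof -
    have "(\<Sum>c\<in>C. \<psi> (symdiff y c)) = (\<Sum>c\<in>C. \<psi> c)"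
      by (rule sum.reindex_bij_witness[where i="symdiff y" and j="symdiff y"]) (auto intro: clo y)
    also have "\<dots> = (\<Sum>c\<in>C. \<alpha> * s * ph c)"
      by (intro sum.cong refl) (simp add: psiC)
    finally show ?thesis by (simp add: Pform S0_def sum_distrib_left)
  qed
  have PC': "P (symdiff d Q) = \<beta> * s * S1 / of_nat N" if d: "d \<in> C" for d
  proof -
    have e: "symdiff (symdiff d Q) c = symdiff (symdiff d c) Q" for c
      by (auto simp: symdiff_def)
    have "(\<Sum>c\<in>C. \<psi> (symdiff (symdiff d c) Q)) = (\<Sum>c\<in>C. \<psi> (symdiff c Q))"
      by (rule sum.reindex_bij_witness[where i="symdiff d" and j="symdiff d"]) (auto intro: clo d)
    also have "\<dots> = (\<Sum>c\<in>C. \<beta> * s * ph (symdiff c Q))"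
      by (intro sum.cong refl) (simp add: psiC' C'_def)
    finally show ?thesis by (simp add: Pform e S1_def sum_distrib_left)
  qed
  define u where "u = Rz_diag (- \<phi>) True"
  define v where "v = Rz_diag (- \<phi>) False"
  have phc: "ph y = u ^ card y * v ^ (card Q - card y)" if "y \<subseteq> Q" for y
    unfolding ph_def u_def v_def Q_def using ph_card that Q_def by blast
  have nu: "cmod u = 1" "cmod v = 1" by (simp_all add: u_def v_def)
  have B0: "real N - 2 \<le> cmod S0"
    unfolding S0_def cardC[symmetric]
  proof (rule sum_bound[OF finC emp, where w="u ^ 2 ^ (m - 1) * v ^ (card Q - 2 ^ (m - 1))"])
    fix c assume "c \<in> C" "c \<noteq> {}"
    then show "ph c = u ^ 2 ^ (m - 1) * v ^ (card Q - 2 ^ (m - 1))"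
      using phc[OF CQ] shortRM_card[of c m] by (simp add: C_def)
  qed (simp_all add: nph norm_mult norm_power nu)
  have B1: "real N - 2 \<le> cmod S1"
    unfolding S1_def cardC[symmetric]
  proof (rule sum_bound[OF finC emp, where w="u ^ (card Q - 2 ^ (m - 1)) * v ^ (card Q - (card Q - 2 ^ (m - 1)))"])
    fix c assume c: "c \<in> C" "c \<noteq> {}"
    have "symdiff c Q = Q - c" using CQ[OF c(1)] by (auto simp: symdiff_def)
    moreover have "card (Q - c) = card Q - 2 ^ (m - 1)"
      using c CQ[OF c(1)] shortRM_card[of c m] by (simp add: C_def card_Diff_subset finite_subset Q_def)
    ultimately show "ph (symdiff c Q) = u ^ (card Q - 2 ^ (m - 1)) * v ^ (card Q - (card Q - 2 ^ (m - 1)))"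
      using phc[of "Q - c"] by auto
  qed (simp_all add: nph norm_mult norm_power nu)
  have Npos: "real N > 0" by (simp add: N_def)
  have s2': "s\<^sup>2 = 1 / real N" using s2 Npos by (simp add: field_simps)
  have spos: "s \<ge> 0" by (simp add: s_def)
  have N8: "real N \<ge> 2"
  proof -
    have "(2::real) ^ 1 \<le> 2 ^ m" using m2 by (intro power_increasing) auto
    then show ?thesis by (simp add: N_def)
  qed
  have SC: "(\<Sum>y\<in>C. (cmod (P y))\<^sup>2) = (cmod \<alpha>)\<^sup>2 * (cmod S0)\<^sup>2 / (real N)\<^sup>2"
  proof -
    have "(\<Sum>y\<in>C. (cmod (P y))\<^sup>2) = (\<Sum>y\<in>C. (cmod \<alpha> * s * cmod S0 / real N)\<^sup>2)"
      by (intro sum.cong refl) (simp add: PC norm_mult norm_divide spos)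
    also have "\<dots> = real N * (cmod \<alpha> * s * cmod S0 / real N)\<^sup>2" by (simp add: cardC)
    also have "\<dots> = (cmod \<alpha>)\<^sup>2 * (cmod S0)\<^sup>2 / (real N)\<^sup>2"
      using s2' Npos by (simp add: power_mult_distrib power_divide field_simps power2_eq_square)
    finally show ?thesis .
  qed
  have SC': "(\<Sum>y\<in>C'. (cmod (P y))\<^sup>2) = (cmod \<beta>)\<^sup>2 * (cmod S1)\<^sup>2 / (real N)\<^sup>2"
  proof -
    have "(\<Sum>y\<in>C'. (cmod (P y))\<^sup>2) = (\<Sum>d\<in>C. (cmod (P (symdiff d Q)))\<^sup>2)"
      unfolding C'_def by (simp add: sum.reindex[OF injQ])
    also have "\<dots> = (\<Sum>y\<in>C. (cmod \<beta> * s * cmod S1 / real N)\<^sup>2)"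
      by (intro sum.cong refl) (simp add: PC' norm_mult norm_divide spos)
    also have "\<dots> = real N * (cmod \<beta> * s * cmod S1 / real N)\<^sup>2" by (simp add: cardC)
    also have "\<dots> = (cmod \<beta>)\<^sup>2 * (cmod S1)\<^sup>2 / (real N)\<^sup>2"
      using s2' Npos by (simp add: power_mult_distrib power_divide field_simps power2_eq_square)
    finally show ?thesis .
  qed
  have succ: "sqnorm m P \<ge> ((real N - 2) / real N)\<^sup>2"
  proof -
    have "(\<Sum>y\<in>C \<union> C'. (cmod (P y))\<^sup>2) \<le> sqnorm m P"
      unfolding sqnorm_def Q_def[symmetric] by (rule sum_mono2[OF finPQ sub]) simp
    moreover have "(\<Sum>y\<in>C \<union> C'. (cmod (P y))\<^sup>2) = (cmod \<alpha>)\<^sup>2 * (cmod S0)\<^sup>2 / (real N)\<^sup>2 + (cmod \<beta>)\<^sup>2 * (cmod S1)\<^sup>2 / (real N)\<^sup>2"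
      by (simp add: sum.union_disjoint[OF finC finC' dis] SC SC')
    moreover have "(real N - 2)\<^sup>2 \<le> (cmod S0)\<^sup>2" using B0 N8 by (intro power_mono) auto
    moreover have "(real N - 2)\<^sup>2 \<le> (cmod S1)\<^sup>2" using B1 N8 by (intro power_mono) auto
    moreover have "(cmod \<alpha>)\<^sup>2 * (real N - 2)\<^sup>2 / (real N)\<^sup>2 + (cmod \<beta>)\<^sup>2 * (real N - 2)\<^sup>2 / (real N)\<^sup>2 = ((real N - 2) / real N)\<^sup>2"
      using assms(2) by (simp add: power_divide add_divide_distrib[symmetric] distrib_right[symmetric])
    ultimately show ?thesis
      by (smt (verit, ccfv_threshold) divide_right_mono mult_left_mono zero_le_power2)
  qed
  have xe: "(real N - 2) / real N = 1 - 1 / 2 ^ (m - 1)"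
  proof -
    have "real N = 2 * 2 ^ (m - 1)" using m2 by (cases m) (auto simp: N_def)
    then show ?thesis by (simp add: field_simps)
  qed
  have x01: "0 \<le> 1 - 1 / (2::real) ^ (m - 1)" "1 - 1 / (2::real) ^ (m - 1) \<le> 1"
    by (simp_all add: field_simps)
  have "(1 - 1 / (2::real) ^ (m - 1)) ^ m \<le> (1 - 1 / 2 ^ (m - 1)) ^ 2"
    by (rule power_decreasing[OF m2 x01])
  then show ?thesis
    using succ fp xe unfolding \<psi>_def by simp
qed

end
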